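(* Let $P$ be a partial order on $U=\{u_1,\dots,u_n\}$, let $\widetilde G=(U,V,\widetilde E)=\widehat C(P)$, let $H$ be the associated split graph of $\widetilde G$ and $H^*$ the conflict graph of $H$. Then every edge $u_iv_i$, $1\le i\le n$, is an isolated vertex of $H^*$.
   Context: $V=\{v_1,\dots,v_n\}$ is a disjoint copy of $U$ and $\widehat C(P)=(U,V,\widetilde E)$ is the bipartite graph with $u_iv_j\in\widetilde E$ iff NOT $u_i<_Pu_j$ (so $u_iv_i\in\widetilde E$). The associated split graph $H$ has vertex set $U\cup V$ and edge set $\widetilde E$ together with all pairs of distinct vertices of $V$. Two edges $e,e'$ of $H$ are in conflict if there are vertices $w_1,\dots,w_4$ (not necessarily distinct) with $e=w_2w_3$, $e'=w_4w_1$ and $w_1w_2,w_3w_4$ non-edges of $H$; the conflict graph $H^*$ has the edges of $H$ as vertices, adjacent iff in conflict. *)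

theory Defs
  imports Main
begin

text \<open>The poset P on the finite ground set U is given as a (reflexive) partial order
relation r on U (library notion partial_order_on); u <_P w means (u,w) \<in> r and u \<noteq> w.
The vertices of the split graph H are Inl u (the copy u_i in U) and Inr u
(the disjoint copy v_i in V).\<close>

definition strict_less :: "('a \<times> 'a) set \<Rightarrow> 'a \<Rightarrow> 'a \<Rightarrow> bool" where
  "strict_less r x y \<longleftrightarrow> (x, y) \<in> r \<and> x \<noteq> y"

definition split_vertices :: "'a set \<Rightarrow> ('a + 'a) set" where
  "split_vertices U = Inl ` U \<union> Inr ` U"

fun split_adj :: "'a set \<Rightarrow> ('a \<times> 'a) set \<Rightarrow> ('a + 'a) \<Rightarrow> ('a + 'a) \<Rightarrow> bool" where
  "split_adj U r (Inl u) (Inr v) = (u \<in> U \<and> v \<in> U \<and> \<not> strict_less r u v)"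
| "split_adj U r (Inr v) (Inl u) = (u \<in> U \<and> v \<in> U \<and> \<not> strict_less r u v)"
| "split_adj U r (Inr v) (Inr w) = (v \<in> U \<and> w \<in> U \<and> v \<noteq> w)"
| "split_adj U r (Inl u) (Inl w) = False"

definition split_edges :: "'a set \<Rightarrow> ('a \<times> 'a) set \<Rightarrow> ('a + 'a) set set" where
  "split_edges U r = {{x, y} | x y. split_adj U r x y}"

definition split_nonedge :: "'a set \<Rightarrow> ('a \<times> 'a) set \<Rightarrow> ('a + 'a) \<Rightarrow> ('a + 'a) \<Rightarrow> bool" where
  "split_nonedge U r x y \<longleftrightarrow> x \<in> split_vertices U \<and> y \<in> split_vertices U \<and> x \<noteq> y
      \<and> \<not> split_adj U r x y"

definition in_conflict :: "'a set \<Rightarrow> ('a \<times> 'a) set \<Rightarrow> ('a + 'a) set \<Rightarrow> ('a + 'a) set \<Rightarrow> bool" where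
  "in_conflict U r e e' \<longleftrightarrow>
     e \<in> split_edges U r \<and> e' \<in> split_edges U r \<and>
     (\<exists>w1 w2 w3 w4. e = {w2, w3} \<and> e' = {w4, w1}
        \<and> split_nonedge U r w1 w2 \<and> split_nonedge U r w3 w4)"

definition isolated_in_conflict_graph :: "'a set \<Rightarrow> ('a \<times> 'a) set \<Rightarrow> ('a + 'a) set \<Rightarrow> bool" where
  "isolated_in_conflict_graph U r e \<longleftrightarrow>
     e \<in> split_edges U r \<and> (\<forall>e' \<in> split_edges U r. \<not> in_conflict U r e e')"

end

theory Submission
  imports Defs
begin

lemma adj_sym: "split_adj U r x y \<Longrightarrow> split_adj U r y x"
  by (cases x; cases y) auto

lemma edge_adj: "{x, y} \<in> split_edges U r \<Longrightarrow> split_adj U r x y"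
  unfolding split_edges_def
  by (auto simp: doubleton_eq_iff dest: adj_sym)

lemma trans_less:
  assumes "partial_order_on U r" "strict_less r x u" "strict_less r u v"
  shows "strict_less r x v"
proof -
  have t: "trans r" and a: "antisym r" using assms(1)
    unfolding partial_order_on_def preorder_on_def by auto
  have "(x,v) \<in> r" using t assms(2,3) unfolding strict_less_def trans_def by blast
  moreover have "x \<noteq> v" using a assms(2,3) unfolding strict_less_def antisym_def by blast
  ultimately show ?thesis unfolding strict_less_def by simp
qed

lemma nonInl: "split_nonedge U r w (Inl u) \<Longrightarrow> u \<in> U \<Longrightarrow>
   (\<exists>x. w = Inl x) \<or> (\<exists>v. w = Inr v \<and> strict_less r u v)"
  unfolding split_nonedge_def split_vertices_def by (cases w) auto

lemma nonInr: "split_nonedge U r w (Inr u) \<Longrightarrow> u \<in> U \<Longrightarrow>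
   (\<exists>x. w = Inl x \<and> strict_less r x u)"
  unfolding split_nonedge_def split_vertices_def by (cases w) auto

lemma nonsym: "split_nonedge U r x y \<Longrightarrow> split_nonedge U r y x"
  unfolding split_nonedge_def using adj_sym by blast

theorem lemma13:
  fixes U :: "'a set" and r :: "('a \<times> 'a) set"
  assumes "finite U" and "partial_order_on U r" and "u \<in> U"
  shows "isolated_in_conflict_graph U r {Inl u, Inr u}"
proof -
  have e: "{Inl u, Inr u} \<in> split_edges U r"
    unfolding split_edges_def
    by (rule CollectI, rule exI[of _ "Inl u"], rule exI[of _ "Inr u"])
       (simp add: assms(3) strict_less_def)
  have "\<not> in_conflict U r {Inl u, Inr u} e'" for e'
  proof
    assume "in_conflict U r {Inl u, Inr u} e'"
    then obtain w1 w2 w3 w4 where ee: "e' \<in> split_edges U r" and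
      q: "{Inl u, Inr u} = {w2, w3}" "e' = {w4, w1}"
      and n1: "split_nonedge U r w1 w2" and n2: "split_nonedge U r w3 w4"
      unfolding in_conflict_def by blast
    have ad: "split_adj U r w4 w1" using ee q(2) edge_adj by blast
    from q(1) have "(w2 = Inl u \<and> w3 = Inr u) \<or> (w2 = Inr u \<and> w3 = Inl u)"
      by (auto simp: doubleton_eq_iff)
    then show False
    proof
      assume h: "w2 = Inl u \<and> w3 = Inr u"
      obtain x where x: "w4 = Inl x" "strict_less r x u"
        using nonInr[of U r w4 u] nonsym[OF n2] h assms(3) by auto
      from nonInl[of U r w1 u] n1 h assms(3) ad x show False
        using trans_less[OF assms(2)] by auto
    next
      assume h: "w2 = Inr u \<and> w3 = Inl u"
      obtain x where x: "w1 = Inl x" "strict_less r x u"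
        using nonInr[of U r w1 u] n1 h assms(3) by auto
      from nonInl[of U r w4 u] nonsym[OF n2] h assms(3) ad x show False
        using trans_less[OF assms(2)] by auto
    qed
  qed
  then show ?thesis using e unfolding isolated_in_conflict_graph_def by blast
qed

end
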